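(* Let $(\mathfrak g,D)$ be a difference Lie algebra over $\mathbb R$. Then the map sending an infinitesimal deformation generated by $(\hat\omega,\hat D)$ to the class $[(\hat\omega,\hat D)]$ induces a bijection between equivalence classes of infinitesimal deformations of $(\mathfrak g,D)$ and the second regular cohomology group $\mathcal H^2(\mathfrak g,D)$.
   Context: A difference Lie algebra $(\mathfrak g,D)$: a Lie algebra $\mathfrak g$ with linear $D$ satisfying $D[x,y]=[x,D(y)]-[y,D(x)]+[D(x),D(y)]$. On $\mathbb R[t]/(t^2)\otimes\mathfrak g$ extend the bracket bilinearly and $D$ linearly over $\mathbb R[t]/(t^2)$. Linear maps $\hat\omega:\wedge^2\mathfrak g\to\mathfrak g$, $\hat D:\mathfrak g\to\mathfrak g$ generate an infinitesimal deformation if $[\cdot,\cdot]_t=[\cdot,\cdot]+t\hat\omega$ is a Lie bracket on $\mathbb R[t]/(t^2)\otimes\mathfrak g$ and $D_t=D+t\hat D$ is a difference operator for it. Two infinitesimal deformations $([\cdot,\cdot]^1_t,D^1_t)$, $([\cdot,\cdot]^2_t,D^2_t)$ are equivalent if there is $N\in\mathrm{Hom}(\mathfrak g,\mathfrak g)$ such that $\varphi_t=\mathrm{Id}+tN$ satisfies $\varphi_t[x,y]^1_t=[\varphi_tx,\varphi_ty]^2_t$ for all $x,y\in\mathfrak g$ and $D^2_t\circ\varphi_t=\varphi_t\circ D^1_t$ as $\mathbb R[t]/(t^2)$-module maps. Regular cohomology: $C^1(\mathfrak g,D)=\mathrm{Hom}(\mathfrak g,\mathfrak g)$, $C^n(\mathfrak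 g,D)=\mathrm{Hom}(\wedge^n\mathfrak g,\mathfrak g)\oplus\mathrm{Hom}(\wedge^{n-1}\mathfrak g,\mathfrak g)$ ($n\ge2$), $\bar\delta(f,\theta)=(d^{CE}_{\mathrm{ad}}f,d^{CE}_{\mathrm{ad}_D}\theta+T(f))$ (for $n=1$, $\bar\delta f=(d^{CE}_{\mathrm{ad}}f,T(f))$), where $d^{CE}_{\mathrm{ad}}$, $d^{CE}_{\mathrm{ad}_D}$ are Chevalley–Eilenberg differentials with coefficients in the adjoint representation and in $\mathrm{ad}_D(x)u=[x,u]+[D(x),u]$, and $T(f)(x_1,\dots,x_n)=(-1)^n\big(\sum_{k=1}^n\sum_{1\le i_1<\cdots<i_k\le n}f(y_1,\dots,y_n)-D(f(x_1,\dots,x_n))\big)$ with $y_j=D(x_j)$ for $j\in\{i_1,\dots,i_k\}$, $y_j=x_j$ otherwise. $\mathcal H^n(\mathfrak g,D)$ is the $n$-th cohomology of this complex. *)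

theory Defs
  imports "HOL-Analysis.Analysis"
begin

definition lie_algebra :: "('a::real_vector \<Rightarrow> 'a \<Rightarrow> 'a) \<Rightarrow> bool" where
  "lie_algebra br \<longleftrightarrow> bilinear br \<and> (\<forall>x. br x x = 0) \<and>
     (\<forall>x y z. br x (br y z) + br y (br z x) + br z (br x y) = 0)"

definition difference_op :: "('a::real_vector \<Rightarrow> 'a \<Rightarrow> 'a) \<Rightarrow> ('a \<Rightarrow> 'a) \<Rightarrow> bool" where
  "difference_op br D \<longleftrightarrow> linear D \<and>
     (\<forall>x y. D (br x y) = br x (D y) - br y (D x) + br (D x) (D y))"

definition diff_lie_algebra :: "('a::real_vector \<Rightarrow> 'a \<Rightarrow> 'a) \<Rightarrow> ('a \<Rightarrow> 'a) \<Rightarrow> bool" where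
  "diff_lie_algebra br D \<longleftrightarrow> lie_algebra br \<and> difference_op br D"

definition alt2 :: "('a::real_vector \<Rightarrow> 'a \<Rightarrow> 'a) \<Rightarrow> bool" where
  "alt2 f \<longleftrightarrow> bilinear f \<and> (\<forall>x. f x x = 0)"

text \<open>An element x0 + t x1 of R[t]/(t^2) (x) g is represented by the pair (x0, x1).\<close>

definition tbr :: "('a::real_vector \<Rightarrow> 'a \<Rightarrow> 'a) \<Rightarrow> ('a \<Rightarrow> 'a \<Rightarrow> 'a) \<Rightarrow> 'a \<times> 'a \<Rightarrow> 'a \<times> 'a \<Rightarrow> 'a \<times> 'a" where
  "tbr br \<omega> p q = (br (fst p) (fst q), br (fst p) (snd q) + br (snd p) (fst q) + \<omega> (fst p) (fst q))"

definition tD :: "('a::real_vector \<Rightarrow> 'a) \<Rightarrow> ('a \<Rightarrow> 'a) \<Rightarrow> 'a \<times> 'a \<Rightarrow> 'a \<times> 'a" where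
  "tD D Dh p = (D (fst p), D (snd p) + Dh (fst p))"

text \<open>phi_t = Id + t N acting on R[t]/(t^2) (x) g\<close>
definition tphi :: "('a::real_vector \<Rightarrow> 'a) \<Rightarrow> 'a \<times> 'a \<Rightarrow> 'a \<times> 'a" where
  "tphi N p = (fst p, snd p + N (fst p))"

definition inf_deformation ::
  "('a::real_vector \<Rightarrow> 'a \<Rightarrow> 'a) \<Rightarrow> ('a \<Rightarrow> 'a) \<Rightarrow> ('a \<Rightarrow> 'a \<Rightarrow> 'a) \<Rightarrow> ('a \<Rightarrow> 'a) \<Rightarrow> bool" where
  "inf_deformation br D \<omega> Dh \<longleftrightarrow> alt2 \<omega> \<and> linear Dh \<and>
     diff_lie_algebra (tbr br \<omega>) (tD D Dh)"

definition deformations :: "('a::real_vector \<Rightarrow> 'a \<Rightarrow> 'a) \<Rightarrow> ('a \<Rightarrow> 'a) \<Rightarrow>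
    (('a \<Rightarrow> 'a \<Rightarrow> 'a) \<times> ('a \<Rightarrow> 'a)) set" where
  "deformations br D = {(\<omega>, Dh). inf_deformation br D \<omega> Dh}"

definition deform_equiv :: "('a::real_vector \<Rightarrow> 'a \<Rightarrow> 'a) \<Rightarrow> ('a \<Rightarrow> 'a) \<Rightarrow>
    ('a \<Rightarrow> 'a \<Rightarrow> 'a) \<times> ('a \<Rightarrow> 'a) \<Rightarrow> ('a \<Rightarrow> 'a \<Rightarrow> 'a) \<times> ('a \<Rightarrow> 'a) \<Rightarrow> bool" where
  "deform_equiv br D d1 d2 \<longleftrightarrow> (\<exists>N. linear N \<and>
     (\<forall>x y. tphi N (tbr br (fst d1) (x, 0) (y, 0)) = tbr br (fst d2) (tphi N (x, 0)) (tphi N (y, 0))) \<and>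
     (\<forall>p. tD D (snd d2) (tphi N p) = tphi N (tD D (snd d1) p)))"

definition deform_rel :: "('a::real_vector \<Rightarrow> 'a \<Rightarrow> 'a) \<Rightarrow> ('a \<Rightarrow> 'a) \<Rightarrow>
    ((('a \<Rightarrow> 'a \<Rightarrow> 'a) \<times> ('a \<Rightarrow> 'a)) \<times> (('a \<Rightarrow> 'a \<Rightarrow> 'a) \<times> ('a \<Rightarrow> 'a))) set" where
  "deform_rel br D = {(d1, d2). d1 \<in> deformations br D \<and> d2 \<in> deformations br D \<and> deform_equiv br D d1 d2}"

text \<open>Chevalley-Eilenberg differential (adjoint coefficients) on 2-cochains.\<close>
definition dCE2 :: "('a::real_vector \<Rightarrow> 'a \<Rightarrow> 'a) \<Rightarrow> ('a \<Rightarrow> 'a \<Rightarrow> 'a) \<Rightarrow> 'a \<Rightarrow> 'a \<Rightarrow> 'a \<Rightarrow> 'a" where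
  "dCE2 br f x1 x2 x3 =
     br x1 (f x2 x3) - br x2 (f x1 x3) + br x3 (f x1 x2)
     - f (br x1 x2) x3 + f (br x1 x3) x2 - f (br x2 x3) x1"

text \<open>Chevalley-Eilenberg differential on 1-cochains with coefficients in a representation rho.\<close>
definition dCE1 :: "('a::real_vector \<Rightarrow> 'a \<Rightarrow> 'a) \<Rightarrow> ('a \<Rightarrow> 'a \<Rightarrow> 'a) \<Rightarrow> ('a \<Rightarrow> 'a) \<Rightarrow> 'a \<Rightarrow> 'a \<Rightarrow> 'a" where
  "dCE1 br \<rho> f x y = \<rho> x (f y) - \<rho> y (f x) - f (br x y)"

definition ad :: "('a::real_vector \<Rightarrow> 'a \<Rightarrow> 'a) \<Rightarrow> 'a \<Rightarrow> 'a \<Rightarrow> 'a" where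
  "ad br x u = br x u"

definition adD :: "('a::real_vector \<Rightarrow> 'a \<Rightarrow> 'a) \<Rightarrow> ('a \<Rightarrow> 'a) \<Rightarrow> 'a \<Rightarrow> 'a \<Rightarrow> 'a" where
  "adD br D x u = br x u + br (D x) u"

definition T1 :: "('a::real_vector \<Rightarrow> 'a) \<Rightarrow> ('a \<Rightarrow> 'a) \<Rightarrow> 'a \<Rightarrow> 'a" where
  "T1 D f x = - (f (D x) - D (f x))"

definition T2 :: "('a::real_vector \<Rightarrow> 'a) \<Rightarrow> ('a \<Rightarrow> 'a \<Rightarrow> 'a) \<Rightarrow> 'a \<Rightarrow> 'a \<Rightarrow> 'a" where
  "T2 D f x1 x2 = (f (D x1) x2 + f x1 (D x2) + f (D x1) (D x2)) - D (f x1 x2)"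

definition C2 :: "(('a::real_vector \<Rightarrow> 'a \<Rightarrow> 'a) \<times> ('a \<Rightarrow> 'a)) set" where
  "C2 = {(f, \<theta>). alt2 f \<and> linear \<theta>}"

definition delta2 :: "('a::real_vector \<Rightarrow> 'a \<Rightarrow> 'a) \<Rightarrow> ('a \<Rightarrow> 'a) \<Rightarrow>
    ('a \<Rightarrow> 'a \<Rightarrow> 'a) \<times> ('a \<Rightarrow> 'a) \<Rightarrow> ('a \<Rightarrow> 'a \<Rightarrow> 'a \<Rightarrow> 'a) \<times> ('a \<Rightarrow> 'a \<Rightarrow> 'a)" where
  "delta2 br D c = (dCE2 br (fst c), (\<lambda>x y. dCE1 br (adD br D) (snd c) x y + T2 D (fst c) x y))"

definition delta1 :: "('a::real_vector \<Rightarrow> 'a \<Rightarrow> 'a) \<Rightarrow> ('a \<Rightarrow> 'a) \<Rightarrow>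
    ('a \<Rightarrow> 'a) \<Rightarrow> ('a \<Rightarrow> 'a \<Rightarrow> 'a) \<times> ('a \<Rightarrow> 'a)" where
  "delta1 br D N = (dCE1 br (ad br) N, T1 D N)"

definition Z2 :: "('a::real_vector \<Rightarrow> 'a \<Rightarrow> 'a) \<Rightarrow> ('a \<Rightarrow> 'a) \<Rightarrow> (('a \<Rightarrow> 'a \<Rightarrow> 'a) \<times> ('a \<Rightarrow> 'a)) set" where
  "Z2 br D = {c \<in> C2. delta2 br D c = ((\<lambda>x y z. 0), (\<lambda>x y. 0))}"

definition B2 :: "('a::real_vector \<Rightarrow> 'a \<Rightarrow> 'a) \<Rightarrow> ('a \<Rightarrow> 'a) \<Rightarrow> (('a \<Rightarrow> 'a \<Rightarrow> 'a) \<times> ('a \<Rightarrow> 'a)) set" where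
  "B2 br D = {delta1 br D N | N. linear N}"

definition coh_rel :: "('a::real_vector \<Rightarrow> 'a \<Rightarrow> 'a) \<Rightarrow> ('a \<Rightarrow> 'a) \<Rightarrow>
    ((('a \<Rightarrow> 'a \<Rightarrow> 'a) \<times> ('a \<Rightarrow> 'a)) \<times> (('a \<Rightarrow> 'a \<Rightarrow> 'a) \<times> ('a \<Rightarrow> 'a))) set" where
  "coh_rel br D = {(c, c'). c \<in> Z2 br D \<and> c' \<in> Z2 br D \<and>
      ((\<lambda>x y. fst c x y - fst c' x y), (\<lambda>x. snd c x - snd c' x)) \<in> B2 br D}"

definition H2 :: "('a::real_vector \<Rightarrow> 'a \<Rightarrow> 'a) \<Rightarrow> ('a \<Rightarrow> 'a) \<Rightarrow> (('a \<Rightarrow> 'a \<Rightarrow> 'a) \<times> ('a \<Rightarrow> 'a)) set set" where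
  "H2 br D = Z2 br D // coh_rel br D"

end

theory Submission
  imports Defs
begin

lemmas bil = bilinear_ladd bilinear_radd bilinear_lsub bilinear_rsub bilinear_lneg bilinear_rneg
  bilinear_lzero bilinear_rzero bilinear_lmul bilinear_rmul

lemma skew:
  assumes "bilinear f" "\<forall>x. f x x = 0"
  shows "f x y = - f y x"
proof -
  have "f (x+y) (x+y) = 0" using assms(2) by blast
  hence "f x x + f x y + (f y x + f y y) = 0"
    using assms(1) by (simp add: bilinear_ladd bilinear_radd add.assoc)
  thus ?thesis using assms(2) by (simp add: eq_neg_iff_add_eq_0)
qed

lemma tbr_bilinear:
  assumes "bilinear br" "bilinear \<omega>"
  shows "bilinear (tbr br \<omega>)"
  unfolding bilinear_def
proof (intro conjI allI)
  fix x :: "'a \<times> 'a"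
  show "linear (tbr br \<omega> x)"
    by (rule linearI) (auto simp: tbr_def assms[THEN bilinear_radd] assms[THEN bilinear_rmul]
        prod_eq_iff scaleR_add_right algebra_simps)
next
  fix y :: "'a \<times> 'a"
  show "linear (\<lambda>x. tbr br \<omega> x y)"
    by (rule linearI) (auto simp: tbr_def assms[THEN bilinear_ladd] assms[THEN bilinear_lmul]
        prod_eq_iff scaleR_add_right algebra_simps)
qed

definition cyc :: "('a::real_vector \<Rightarrow> 'a \<Rightarrow> 'a) \<Rightarrow> ('a \<Rightarrow> 'a \<Rightarrow> 'a) \<Rightarrow> 'a \<Rightarrow> 'a \<Rightarrow> 'a \<Rightarrow> 'a" where
  "cyc br \<omega> x y z = br x (\<omega> y z) + br y (\<omega> z x) + br z (\<omega> x y)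
     + \<omega> x (br y z) + \<omega> y (br z x) + \<omega> z (br x y)"

lemma L1:
  assumes "lie_algebra br" "bilinear \<omega>"
  shows "snd (tbr br \<omega> p (tbr br \<omega> q r) + tbr br \<omega> q (tbr br \<omega> r p) + tbr br \<omega> r (tbr br \<omega> p q))
     = cyc br \<omega> (fst p) (fst q) (fst r)"
proof -
  obtain p0 p1 q0 q1 r0 r1 where P: "p = (p0,p1)" "q = (q0,q1)" "r = (r0,r1)"
    by (metis prod.collapse)
  have b: "bilinear br" and J: "\<And>x y z. br x (br y z) + br y (br z x) + br z (br x y) = 0"
    using assms(1) unfolding lie_algebra_def by auto
  have "snd (tbr br \<omega> p (tbr br \<omega> q r) + tbr br \<omega> q (tbr br \<omega> r p) + tbr br \<omega> r (tbr br \<omega> p q))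
     = cyc br \<omega> p0 q0 r0 + (br p1 (br q0 r0) + br q0 (br r0 p1) + br r0 (br p1 q0))
      + (br p0 (br q1 r0) + br q1 (br r0 p0) + br r0 (br p0 q1))
      + (br p0 (br q0 r1) + br q0 (br r1 p0) + br r1 (br p0 q0))"
    unfolding P by (simp add: tbr_def cyc_def b[THEN bilinear_radd] algebra_simps)
  also have "\<dots> = cyc br \<omega> p0 q0 r0" by (simp only: J add_0_right)
  finally show ?thesis by (simp add: P)
qed

lemma L2:
  assumes "lie_algebra br" "alt2 \<omega>"
  shows "dCE2 br \<omega> x y z = cyc br \<omega> x y z"
proof -
  have b: "bilinear br" using assms(1) unfolding lie_algebra_def by auto
  have skb: "\<And>a b. br a b = - br b a"
    by (rule skew) (use assms(1) in \<open>auto simp: lie_algebra_def\<close>)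
  have bo: "bilinear \<omega>" using assms(2) unfolding alt2_def by auto
  have sk: "\<And>a b. \<omega> a b = - \<omega> b a"
    by (rule skew) (use assms(2) in \<open>auto simp: alt2_def\<close>)
  have e1: "br y (\<omega> x z) = - br y (\<omega> z x)"
    using sk[of x z] bilinear_rneg[OF b] by simp
  have e2: "\<omega> (br x y) z = - \<omega> z (br x y)" by (rule sk)
  have e3: "\<omega> (br x z) y = \<omega> y (br z x)"
  proof -
    have "\<omega> (br x z) y = - \<omega> y (br x z)" by (rule sk)
    also have "\<dots> = - \<omega> y (- br z x)" using skb[of x z] by simp
    also have "\<dots> = \<omega> y (br z x)" using bilinear_rneg[OF bo] by simp
    finally show ?thesis .
  qed
  have e4: "\<omega> (br y z) x = - \<omega> x (br y z)" by (rule sk)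
  show ?thesis unfolding dCE2_def cyc_def e1 e2 e3 e4 by (simp add: algebra_simps)
qed

definition EE :: "('a::real_vector \<Rightarrow> 'a \<Rightarrow> 'a) \<Rightarrow> ('a \<Rightarrow> 'a) \<Rightarrow> ('a \<Rightarrow> 'a \<Rightarrow> 'a) \<Rightarrow> ('a \<Rightarrow> 'a) \<Rightarrow> 'a \<Rightarrow> 'a \<Rightarrow> 'a" where
  "EE br D \<omega> Dh x y = D (\<omega> x y) + Dh (br x y) - (br x (Dh y) + \<omega> x (D y) - br y (Dh x)
     - \<omega> y (D x) + br (D x) (Dh y) + br (Dh x) (D y) + \<omega> (D x) (D y))"

lemma L3:
  assumes "difference_op br D" "bilinear br" "bilinear \<omega>" "linear Dh"
  shows "snd (tD D Dh (tbr br \<omega> p q)) - snd (tbr br \<omega> p (tD D Dh q) - tbr br \<omega> q (tD D Dh p)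
      + tbr br \<omega> (tD D Dh p) (tD D Dh q)) = EE br D \<omega> Dh (fst p) (fst q)"
proof -
  obtain p0 p1 q0 q1 where P: "p = (p0,p1)" "q = (q0,q1)"
    by (metis prod.collapse)
  have lD: "linear D" and J: "\<And>x y. D (br x y) - (br x (D y) - br y (D x) + br (D x) (D y)) = 0"
    using assms(1) unfolding difference_op_def by auto
  have "snd (tD D Dh (tbr br \<omega> p q)) - snd (tbr br \<omega> p (tD D Dh q) - tbr br \<omega> q (tD D Dh p)
      + tbr br \<omega> (tD D Dh p) (tD D Dh q)) = EE br D \<omega> Dh p0 q0
     + (D (br p0 q1) - (br p0 (D q1) - br q1 (D p0) + br (D p0) (D q1)))
     + (D (br p1 q0) - (br p1 (D q0) - br q0 (D p1) + br (D p1) (D q0)))"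
    unfolding P by (simp add: tbr_def tD_def EE_def assms(2)[THEN bilinear_radd]
       assms(2)[THEN bilinear_ladd] linear_add[OF lD] algebra_simps)
  also have "\<dots> = EE br D \<omega> Dh p0 q0" by (simp only: J add_0_right)
  finally show ?thesis by (simp add: P)
qed

lemma L4:
  assumes "lie_algebra br" "alt2 \<omega>"
  shows "dCE1 br (adD br D) Dh x y + T2 D \<omega> x y = - EE br D \<omega> Dh x y"
proof -
  have sk: "\<And>a b. \<omega> a b = - \<omega> b a"
    by (rule skew) (use assms(2) in \<open>auto simp: alt2_def\<close>)
  have skb: "\<And>a b. br a b = - br b a"
    by (rule skew) (use assms(1) in \<open>auto simp: lie_algebra_def\<close>)
  have e1: "br (Dh x) (D y) = - br (D y) (Dh x)" by (rule skb)
  have e2: "\<omega> (D x) y = - \<omega> y (D x)" by (rule sk)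
  show ?thesis unfolding dCE1_def adD_def T2_def EE_def e1 e2 by (simp add: algebra_simps)
qed

lemma lie_iff:
  assumes "lie_algebra br" "alt2 \<omega>"
  shows "lie_algebra (tbr br \<omega>) \<longleftrightarrow> (\<forall>x y z. cyc br \<omega> x y z = 0)"
proof -
  have b: "bilinear br" and J: "\<And>x y z. br x (br y z) + br y (br z x) + br z (br x y) = 0"
    and bz: "\<And>x. br x x = 0"
    using assms(1) unfolding lie_algebra_def by auto
  have bo: "bilinear \<omega>" and oz: "\<And>x. \<omega> x x = 0" using assms(2) unfolding alt2_def by auto
  have skb: "\<And>a b. br a b = - br b a"
    by (rule skew) (use assms(1) in \<open>auto simp: lie_algebra_def\<close>)
  have alt: "\<forall>p. tbr br \<omega> p p = 0"
  proof
    fix p :: "'a \<times> 'a"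
    show "tbr br \<omega> p p = 0"
      using skb[of "fst p" "snd p"] bz oz by (simp add: tbr_def prod_eq_iff)
  qed
  have fstJ: "fst (tbr br \<omega> p (tbr br \<omega> q r) + tbr br \<omega> q (tbr br \<omega> r p) + tbr br \<omega> r (tbr br \<omega> p q)) = 0"
    for p q r using J by (simp add: tbr_def)
  show ?thesis
  proof
    assume "lie_algebra (tbr br \<omega>)"
    hence JJ: "\<And>p q r. tbr br \<omega> p (tbr br \<omega> q r) + tbr br \<omega> q (tbr br \<omega> r p) + tbr br \<omega> r (tbr br \<omega> p q) = 0"
      unfolding lie_algebra_def by blast
    show "\<forall>x y z. cyc br \<omega> x y z = 0"
    proof (intro allI)
      fix x y z :: 'a
      show "cyc br \<omega> x y z = 0"
        using L1[OF assms(1) bo, of "(x,0)" "(y,0)" "(z,0)"] JJ[of "(x,0)" "(y,0)" "(z,0)"] by simp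
    qed
  next
    assume c: "\<forall>x y z. cyc br \<omega> x y z = 0"
    show "lie_algebra (tbr br \<omega>)"
      unfolding lie_algebra_def
      using tbr_bilinear[OF b bo] alt fstJ L1[OF assms(1) bo] c by (simp add: prod_eq_iff)
  qed
qed

lemma diff_iff:
  assumes "difference_op br D" "bilinear br" "bilinear \<omega>" "linear Dh"
  shows "difference_op (tbr br \<omega>) (tD D Dh) \<longleftrightarrow> (\<forall>x y. EE br D \<omega> Dh x y = 0)"
proof -
  have lD: "linear D" and J: "\<And>x y. D (br x y) = br x (D y) - br y (D x) + br (D x) (D y)"
    using assms(1) unfolding difference_op_def by auto
  have lin: "linear (tD D Dh)"
    by (rule linearI) (auto simp: tD_def prod_eq_iff linear_add[OF lD] linear_add[OF assms(4)]
       linear_scale[OF lD] linear_scale[OF assms(4)] scaleR_add_right)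
  have fstE: "fst (tD D Dh (tbr br \<omega> p q)) = fst (tbr br \<omega> p (tD D Dh q) - tbr br \<omega> q (tD D Dh p)
      + tbr br \<omega> (tD D Dh p) (tD D Dh q))" for p q
    using J by (simp add: tD_def tbr_def)
  have eq: "(a = b) \<longleftrightarrow> (fst a = fst b \<and> snd a - snd b = 0)" for a b :: "'a \<times> 'a"
    by (simp add: prod_eq_iff)
  show ?thesis
  proof
    assume "difference_op (tbr br \<omega>) (tD D Dh)"
    hence JJ: "\<And>p q. tD D Dh (tbr br \<omega> p q) = tbr br \<omega> p (tD D Dh q) - tbr br \<omega> q (tD D Dh p)
      + tbr br \<omega> (tD D Dh p) (tD D Dh q)"
      unfolding difference_op_def by blast
    show "\<forall>x y. EE br D \<omega> Dh x y = 0"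
    proof (intro allI)
      fix x y :: 'a
      show "EE br D \<omega> Dh x y = 0"
        using L3[OF assms, of "(x,0)" "(y,0)"] JJ[of "(x,0)" "(y,0)"] by simp
    qed
  next
    assume c: "\<forall>x y. EE br D \<omega> Dh x y = 0"
    show "difference_op (tbr br \<omega>) (tD D Dh)"
      unfolding difference_op_def
      using lin fstE L3[OF assms] c by (subst eq) simp
  qed
qed

lemma def_iff:
  assumes "diff_lie_algebra br D"
  shows "inf_deformation br D \<omega> Dh \<longleftrightarrow> (\<omega>, Dh) \<in> Z2 br D"
proof (cases "alt2 \<omega> \<and> linear Dh")
  case False thus ?thesis by (auto simp: inf_deformation_def Z2_def C2_def)
next
  case True
  have la: "lie_algebra br" and dop: "difference_op br D"
    using assms unfolding diff_lie_algebra_def by auto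
  have b: "bilinear br" using la unfolding lie_algebra_def by auto
  have bo: "bilinear \<omega>" using True unfolding alt2_def by auto
  have "inf_deformation br D \<omega> Dh \<longleftrightarrow> (\<forall>x y z. cyc br \<omega> x y z = 0) \<and> (\<forall>x y. EE br D \<omega> Dh x y = 0)"
    unfolding inf_deformation_def diff_lie_algebra_def
    using True lie_iff[OF la] diff_iff[OF dop b bo] by auto
  also have "\<dots> \<longleftrightarrow> (\<omega>, Dh) \<in> Z2 br D"
    using True L2[OF la] L4[OF la]
    by (auto simp: Z2_def C2_def delta2_def fun_eq_iff)
  finally show ?thesis .
qed

lemma equiv_iff:
  assumes "diff_lie_algebra br D"
  shows "deform_equiv br D d1 d2 \<longleftrightarrow>
     ((\<lambda>x y. fst d1 x y - fst d2 x y), (\<lambda>x. snd d1 x - snd d2 x)) \<in> B2 br D"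
proof -
  have la: "lie_algebra br" and dop: "difference_op br D"
    using assms unfolding diff_lie_algebra_def by auto
  have b: "bilinear br" using la unfolding lie_algebra_def by auto
  have lD: "linear D" using dop unfolding difference_op_def by auto
  have skb: "\<And>a b. br a b = - br b a"
    by (rule skew) (use la in \<open>auto simp: lie_algebra_def\<close>)
  have A: "(\<forall>x y. tphi N (tbr br (fst d1) (x, 0) (y, 0)) = tbr br (fst d2) (tphi N (x, 0)) (tphi N (y, 0)))
     \<longleftrightarrow> (\<lambda>x y. fst d1 x y - fst d2 x y) = dCE1 br (ad br) N" for N
  proof -
    have "tphi N (tbr br (fst d1) (x, 0) (y, 0)) = tbr br (fst d2) (tphi N (x, 0)) (tphi N (y, 0))
      \<longleftrightarrow> fst d1 x y - fst d2 x y = dCE1 br (ad br) N x y" for x y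
      using skb[of "N x" y]
      by (auto simp: tphi_def tbr_def dCE1_def ad_def b[THEN bilinear_rzero] b[THEN bilinear_lzero]
           algebra_simps)
    thus ?thesis by (simp add: fun_eq_iff)
  qed
  have B: "(\<forall>p. tD D (snd d2) (tphi N p) = tphi N (tD D (snd d1) p))
     \<longleftrightarrow> (\<lambda>x. snd d1 x - snd d2 x) = T1 D N" for N
  proof
    assume h: "\<forall>p. tD D (snd d2) (tphi N p) = tphi N (tD D (snd d1) p)"
    show "(\<lambda>x. snd d1 x - snd d2 x) = T1 D N"
    proof
      fix x
      show "snd d1 x - snd d2 x = T1 D N x"
        using h[rule_format, of "(x,0)"]
        by (auto simp: tD_def tphi_def T1_def linear_0[OF lD] algebra_simps)
    qed
  next
    assume h: "(\<lambda>x. snd d1 x - snd d2 x) = T1 D N"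
    show "\<forall>p. tD D (snd d2) (tphi N p) = tphi N (tD D (snd d1) p)"
    proof
      fix p :: "'a \<times> 'a"
      have "snd d1 (fst p) - snd d2 (fst p) = T1 D N (fst p)" using h by (simp add: fun_eq_iff)
      thus "tD D (snd d2) (tphi N p) = tphi N (tD D (snd d1) p)"
        by (auto simp: tD_def tphi_def T1_def linear_add[OF lD] algebra_simps)
    qed
  qed
  show ?thesis
    unfolding deform_equiv_def B2_def delta1_def using A B by auto
qed

theorem theorem4p6:
  fixes br :: "'a::real_vector \<Rightarrow> 'a \<Rightarrow> 'a" and D :: "'a \<Rightarrow> 'a"
  assumes "diff_lie_algebra br D"
  shows "\<exists>F. bij_betw F (deformations br D // deform_rel br D) (H2 br D) \<and>
           (\<forall>d \<in> deformations br D. F (deform_rel br D `` {d}) = coh_rel br D `` {d})"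
proof -
  have S: "deformations br D = Z2 br D"
    using def_iff[OF assms] by (auto simp: deformations_def)
  have R: "deform_rel br D = coh_rel br D"
    using equiv_iff[OF assms] S by (auto simp: deform_rel_def coh_rel_def)
  show ?thesis
    by (rule exI[of _ id]) (simp add: S R H2_def)
qed

end
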